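(* Let $F\colon\mathcal{A}\to\mathcal{B}$ be an exceptionally Frobenius functor. Then the canonical map $$\varphi\colon R\xrightarrow{R\eta_L}RFL\xrightarrow{\eta_R^{-1}L}L$$ is an isomorphism.
   Context: All categories are $k$-linear triangulated, all functors exact. $F$ has left adjoint $L$ and right adjoint $R$, with units $\eta_R\colon\mathrm{id}_{\mathcal{A}}\to RF$ and $\eta_L\colon\mathrm{id}_{\mathcal{B}}\to FL$. $F$ is exceptional if it is fully faithful and has both adjoints; in that case $\eta_R$ is an isomorphism. $F$ is exceptionally Frobenius if it is exceptional and there exists some isomorphism $R\cong L$. *)

theory Defs
  imports Main
begin

text \<open>Composition is written ccomp C g f for "g after f".\<close>

record ('o, 'm, 'k) kcat =
  cobj   :: "'o set"
  carr   :: "'m set"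
  cdom   :: "'m \<Rightarrow> 'o"
  ccod   :: "'m \<Rightarrow> 'o"
  cid    :: "'o \<Rightarrow> 'm"
  ccomp  :: "'m \<Rightarrow> 'm \<Rightarrow> 'm"
  cadd   :: "'m \<Rightarrow> 'm \<Rightarrow> 'm"
  czero  :: "'o \<Rightarrow> 'o \<Rightarrow> 'm"
  cneg   :: "'m \<Rightarrow> 'm"
  csmult :: "'k \<Rightarrow> 'm \<Rightarrow> 'm"
  cshift :: "'o \<Rightarrow> 'o"
  cshiftm :: "'m \<Rightarrow> 'm"
  cdist  :: "('o \<times> 'o \<times> 'o \<times> 'm \<times> 'm \<times> 'm) set"

definition hom :: "('o, 'm, 'k) kcat \<Rightarrow> 'o \<Rightarrow> 'o \<Rightarrow> 'm set" where
  "hom C X Y = {f. f \<in> carr C \<and> cdom C f = X \<and> ccod C f = Y}"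

definition category :: "('o, 'm, 'k) kcat \<Rightarrow> bool" where
  "category C \<longleftrightarrow>
     (\<forall>f\<in>carr C. cdom C f \<in> cobj C \<and> ccod C f \<in> cobj C) \<and>
     (\<forall>X\<in>cobj C. cid C X \<in> hom C X X) \<and>
     (\<forall>X Y Z f g. f \<in> hom C X Y \<longrightarrow> g \<in> hom C Y Z \<longrightarrow> ccomp C g f \<in> hom C X Z) \<and>
     (\<forall>W X Y Z f g h. f \<in> hom C W X \<longrightarrow> g \<in> hom C X Y \<longrightarrow> h \<in> hom C Y Z \<longrightarrow>
        ccomp C h (ccomp C g f) = ccomp C (ccomp C h g) f) \<and>
     (\<forall>X Y f. f \<in> hom C X Y \<longrightarrow> ccomp C (cid C Y) f = f \<and> ccomp C f (cid C X) = f)"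

definition iso :: "('o, 'm, 'k) kcat \<Rightarrow> 'm \<Rightarrow> bool" where
  "iso C f \<longleftrightarrow> f \<in> carr C \<and>
     (\<exists>g\<in>hom C (ccod C f) (cdom C f).
        ccomp C g f = cid C (cdom C f) \<and> ccomp C f g = cid C (ccod C f))"

definition inv_arr :: "('o, 'm, 'k) kcat \<Rightarrow> 'm \<Rightarrow> 'm" where
  "inv_arr C f = (THE g. g \<in> hom C (ccod C f) (cdom C f) \<and>
       ccomp C g f = cid C (cdom C f) \<and> ccomp C f g = cid C (ccod C f))"

definition klinear :: "('o, 'm, 'k::field) kcat \<Rightarrow> bool" where
  "klinear C \<longleftrightarrow> category C \<and>
     (\<forall>X\<in>cobj C. \<forall>Y\<in>cobj C.
        czero C X Y \<in> hom C X Y \<and>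
        (\<forall>f\<in>hom C X Y. \<forall>g\<in>hom C X Y. cadd C f g \<in> hom C X Y) \<and>
        (\<forall>f\<in>hom C X Y. cneg C f \<in> hom C X Y) \<and>
        (\<forall>a f. f \<in> hom C X Y \<longrightarrow> csmult C a f \<in> hom C X Y) \<and>
        (\<forall>f\<in>hom C X Y. \<forall>g\<in>hom C X Y. \<forall>h\<in>hom C X Y.
           cadd C (cadd C f g) h = cadd C f (cadd C g h)) \<and>
        (\<forall>f\<in>hom C X Y. \<forall>g\<in>hom C X Y. cadd C f g = cadd C g f) \<and>
        (\<forall>f\<in>hom C X Y. cadd C (czero C X Y) f = f) \<and>
        (\<forall>f\<in>hom C X Y. cadd C (cneg C f) f = czero C X Y) \<and>
        (\<forall>a. \<forall>f\<in>hom C X Y. \<forall>g\<in>hom C X Y.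
           csmult C a (cadd C f g) = cadd C (csmult C a f) (csmult C a g)) \<and>
        (\<forall>a b. \<forall>f\<in>hom C X Y. csmult C (a + b) f = cadd C (csmult C a f) (csmult C b f)) \<and>
        (\<forall>a b. \<forall>f\<in>hom C X Y. csmult C (a * b) f = csmult C a (csmult C b f)) \<and>
        (\<forall>f\<in>hom C X Y. csmult C 1 f = f)) \<and>
     (\<forall>X Y Z f f' g. f \<in> hom C X Y \<longrightarrow> f' \<in> hom C X Y \<longrightarrow> g \<in> hom C Y Z \<longrightarrow>
        ccomp C g (cadd C f f') = cadd C (ccomp C g f) (ccomp C g f')) \<and>
     (\<forall>X Y Z f g g'. f \<in> hom C X Y \<longrightarrow> g \<in> hom C Y Z \<longrightarrow> g' \<in> hom C Y Z \<longrightarrow>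
        ccomp C (cadd C g g') f = cadd C (ccomp C g f) (ccomp C g' f)) \<and>
     (\<forall>X Y Z f g a. f \<in> hom C X Y \<longrightarrow> g \<in> hom C Y Z \<longrightarrow>
        ccomp C (csmult C a g) f = csmult C a (ccomp C g f) \<and>
        ccomp C g (csmult C a f) = csmult C a (ccomp C g f))"

definition zero_object :: "('o, 'm, 'k) kcat \<Rightarrow> 'o \<Rightarrow> bool" where
  "zero_object C Z \<longleftrightarrow> Z \<in> cobj C \<and> cid C Z = czero C Z Z"

definition kadditive :: "('o, 'm, 'k::field) kcat \<Rightarrow> bool" where
  "kadditive C \<longleftrightarrow> klinear C \<and> (\<exists>Z. zero_object C Z) \<and>
     (\<forall>X\<in>cobj C. \<forall>Y\<in>cobj C. \<exists>S i1 i2 p1 p2.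
        S \<in> cobj C \<and> i1 \<in> hom C X S \<and> i2 \<in> hom C Y S \<and> p1 \<in> hom C S X \<and> p2 \<in> hom C S Y \<and>
        ccomp C p1 i1 = cid C X \<and> ccomp C p2 i2 = cid C Y \<and>
        ccomp C p1 i2 = czero C Y X \<and> ccomp C p2 i1 = czero C X Y \<and>
        cadd C (ccomp C i1 p1) (ccomp C i2 p2) = cid C S)"

definition shift_automorphism :: "('o, 'm, 'k::field) kcat \<Rightarrow> bool" where
  "shift_automorphism C \<longleftrightarrow>
     bij_betw (cshift C) (cobj C) (cobj C) \<and>
     (\<forall>X\<in>cobj C. \<forall>Y\<in>cobj C.
        bij_betw (cshiftm C) (hom C X Y) (hom C (cshift C X) (cshift C Y))) \<and>
     (\<forall>X\<in>cobj C. cshiftm C (cid C X) = cid C (cshift C X)) \<and>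
     (\<forall>X Y Z f g. f \<in> hom C X Y \<longrightarrow> g \<in> hom C Y Z \<longrightarrow>
        cshiftm C (ccomp C g f) = ccomp C (cshiftm C g) (cshiftm C f)) \<and>
     (\<forall>X Y f g. f \<in> hom C X Y \<longrightarrow> g \<in> hom C X Y \<longrightarrow>
        cshiftm C (cadd C f g) = cadd C (cshiftm C f) (cshiftm C g)) \<and>
     (\<forall>X Y f a. f \<in> hom C X Y \<longrightarrow> cshiftm C (csmult C a f) = csmult C a (cshiftm C f))"

definition triangle :: "('o, 'm, 'k) kcat \<Rightarrow> ('o \<times> 'o \<times> 'o \<times> 'm \<times> 'm \<times> 'm) \<Rightarrow> bool" where
  "triangle C T = (case T of (X, Y, Z, u, v, w) \<Rightarrow>
     X \<in> cobj C \<and> Y \<in> cobj C \<and> Z \<in> cobj C \<and>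
     u \<in> hom C X Y \<and> v \<in> hom C Y Z \<and> w \<in> hom C Z (cshift C X))"

definition triangle_morphism ::
  "('o, 'm, 'k) kcat \<Rightarrow> ('o \<times> 'o \<times> 'o \<times> 'm \<times> 'm \<times> 'm) \<Rightarrow>
   ('o \<times> 'o \<times> 'o \<times> 'm \<times> 'm \<times> 'm) \<Rightarrow> 'm \<Rightarrow> 'm \<Rightarrow> 'm \<Rightarrow> bool" where
  "triangle_morphism C T T' f g h = (case T of (X, Y, Z, u, v, w) \<Rightarrow>
     case T' of (X', Y', Z', u', v', w') \<Rightarrow>
     triangle C T \<and> triangle C T' \<and>
     f \<in> hom C X X' \<and> g \<in> hom C Y Y' \<and> h \<in> hom C Z Z' \<and>
     ccomp C g u = ccomp C u' f \<and> ccomp C h v = ccomp C v' g \<and>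
     ccomp C (cshiftm C f) w = ccomp C w' h)"

definition triangulated :: "('o, 'm, 'k::field) kcat \<Rightarrow> bool" where
  "triangulated C \<longleftrightarrow> kadditive C \<and> shift_automorphism C \<and>
     \<comment> \<open>TR0: distinguished triangles are triangles, closed under isomorphism\<close>
     (\<forall>T\<in>cdist C. triangle C T) \<and>
     (\<forall>T T' f g h. T \<in> cdist C \<longrightarrow> triangle_morphism C T T' f g h \<longrightarrow>
        iso C f \<longrightarrow> iso C g \<longrightarrow> iso C h \<longrightarrow> T' \<in> cdist C) \<and>
     \<comment> \<open>TR1\<close>
     (\<forall>X\<in>cobj C. \<forall>Z. zero_object C Z \<longrightarrow>
        (X, X, Z, cid C X, czero C X Z, czero C Z (cshift C X)) \<in> cdist C) \<and>
     (\<forall>X Y u. X \<in> cobj C \<longrightarrow> Y \<in> cobj C \<longrightarrow> u \<in> hom C X Y \<longrightarrow>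
        (\<exists>Z v w. (X, Y, Z, u, v, w) \<in> cdist C)) \<and>
     \<comment> \<open>TR2: rotation\<close>
     (\<forall>X Y Z u v w. triangle C (X, Y, Z, u, v, w) \<longrightarrow>
        ((X, Y, Z, u, v, w) \<in> cdist C \<longleftrightarrow>
         (Y, Z, cshift C X, v, w, cneg C (cshiftm C u)) \<in> cdist C)) \<and>
     \<comment> \<open>TR3: completion of morphisms\<close>
     (\<forall>X Y Z u v w X' Y' Z' u' v' w' f g.
        (X, Y, Z, u, v, w) \<in> cdist C \<longrightarrow> (X', Y', Z', u', v', w') \<in> cdist C \<longrightarrow>
        f \<in> hom C X X' \<longrightarrow> g \<in> hom C Y Y' \<longrightarrow> ccomp C g u = ccomp C u' f \<longrightarrow>
        (\<exists>h. triangle_morphism C (X, Y, Z, u, v, w) (X', Y', Z', u', v', w') f g h)) \<and>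
     \<comment> \<open>TR4: octahedral axiom\<close>
     (\<forall>X Y Z u v Z' j k X' l i Y' m n.
        (X, Y, Z', u, j, k) \<in> cdist C \<longrightarrow> (Y, Z, X', v, l, i) \<in> cdist C \<longrightarrow>
        (X, Z, Y', ccomp C v u, m, n) \<in> cdist C \<longrightarrow>
        (\<exists>f g. (Z', Y', X', f, g, ccomp C (cshiftm C j) i) \<in> cdist C \<and>
           ccomp C f j = ccomp C m v \<and> ccomp C n f = k \<and>
           ccomp C g m = l \<and> ccomp C (cshiftm C u) n = ccomp C i g))"

record ('o1, 'm1, 'o2, 'm2) ftor =
  fo :: "'o1 \<Rightarrow> 'o2"
  fm :: "'m1 \<Rightarrow> 'm2"

definition id_ftor :: "('o, 'm, 'o, 'm) ftor" where
  "id_ftor = \<lparr>fo = (\<lambda>X. X), fm = (\<lambda>f. f)\<rparr>"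

definition comp_ftor :: "('o2, 'm2, 'o3, 'm3) ftor \<Rightarrow> ('o1, 'm1, 'o2, 'm2) ftor \<Rightarrow>
    ('o1, 'm1, 'o3, 'm3) ftor" where
  "comp_ftor G F = \<lparr>fo = (\<lambda>X. fo G (fo F X)), fm = (\<lambda>f. fm G (fm F f))\<rparr>"

definition is_functor :: "('o1, 'm1, 'k) kcat \<Rightarrow> ('o2, 'm2, 'k) kcat \<Rightarrow>
    ('o1, 'm1, 'o2, 'm2) ftor \<Rightarrow> bool" where
  "is_functor C D F \<longleftrightarrow>
     (\<forall>X\<in>cobj C. fo F X \<in> cobj D) \<and>
     (\<forall>X Y f. f \<in> hom C X Y \<longrightarrow> fm F f \<in> hom D (fo F X) (fo F Y)) \<and>
     (\<forall>X\<in>cobj C. fm F (cid C X) = cid D (fo F X)) \<and>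
     (\<forall>X Y Z f g. f \<in> hom C X Y \<longrightarrow> g \<in> hom C Y Z \<longrightarrow>
        fm F (ccomp C g f) = ccomp D (fm F g) (fm F f))"

definition klinear_functor :: "('o1, 'm1, 'k::field) kcat \<Rightarrow> ('o2, 'm2, 'k) kcat \<Rightarrow>
    ('o1, 'm1, 'o2, 'm2) ftor \<Rightarrow> bool" where
  "klinear_functor C D F \<longleftrightarrow> is_functor C D F \<and>
     (\<forall>X Y f g. f \<in> hom C X Y \<longrightarrow> g \<in> hom C X Y \<longrightarrow>
        fm F (cadd C f g) = cadd D (fm F f) (fm F g)) \<and>
     (\<forall>X Y f a. f \<in> hom C X Y \<longrightarrow> fm F (csmult C a f) = csmult D a (fm F f))"

definition exact_functor :: "('o1, 'm1, 'k::field) kcat \<Rightarrow> ('o2, 'm2, 'k) kcat \<Rightarrow>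
    ('o1, 'm1, 'o2, 'm2) ftor \<Rightarrow> bool" where
  "exact_functor C D F \<longleftrightarrow> klinear_functor C D F \<and>
     (\<exists>xi. (\<forall>X\<in>cobj C. xi X \<in> hom D (fo F (cshift C X)) (cshift D (fo F X)) \<and> iso D (xi X)) \<and>
        (\<forall>X Y f. f \<in> hom C X Y \<longrightarrow>
           ccomp D (xi Y) (fm F (cshiftm C f)) = ccomp D (cshiftm D (fm F f)) (xi X)) \<and>
        (\<forall>X Y Z u v w. (X, Y, Z, u, v, w) \<in> cdist C \<longrightarrow>
           (fo F X, fo F Y, fo F Z, fm F u, fm F v, ccomp D (xi X) (fm F w)) \<in> cdist D))"

definition nat_trans :: "('o1, 'm1, 'k) kcat \<Rightarrow> ('o2, 'm2, 'k) kcat \<Rightarrow>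
    ('o1, 'm1, 'o2, 'm2) ftor \<Rightarrow> ('o1, 'm1, 'o2, 'm2) ftor \<Rightarrow> ('o1 \<Rightarrow> 'm2) \<Rightarrow> bool" where
  "nat_trans C D F G \<eta> \<longleftrightarrow>
     is_functor C D F \<and> is_functor C D G \<and>
     (\<forall>X\<in>cobj C. \<eta> X \<in> hom D (fo F X) (fo G X)) \<and>
     (\<forall>X Y f. f \<in> hom C X Y \<longrightarrow> ccomp D (\<eta> Y) (fm F f) = ccomp D (fm G f) (\<eta> X))"

definition nat_iso :: "('o1, 'm1, 'k) kcat \<Rightarrow> ('o2, 'm2, 'k) kcat \<Rightarrow>
    ('o1, 'm1, 'o2, 'm2) ftor \<Rightarrow> ('o1, 'm1, 'o2, 'm2) ftor \<Rightarrow> ('o1 \<Rightarrow> 'm2) \<Rightarrow> bool" where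
  "nat_iso C D F G \<eta> \<longleftrightarrow> nat_trans C D F G \<eta> \<and> (\<forall>X\<in>cobj C. iso D (\<eta> X))"

definition adjunction :: "('o1, 'm1, 'k) kcat \<Rightarrow> ('o2, 'm2, 'k) kcat \<Rightarrow>
    ('o1, 'm1, 'o2, 'm2) ftor \<Rightarrow> ('o2, 'm2, 'o1, 'm1) ftor \<Rightarrow>
    ('o1 \<Rightarrow> 'm1) \<Rightarrow> ('o2 \<Rightarrow> 'm2) \<Rightarrow> bool" where
  "adjunction C D Lf Rf \<eta> \<epsilon> \<longleftrightarrow>
     is_functor C D Lf \<and> is_functor D C Rf \<and>
     nat_trans C C id_ftor (comp_ftor Rf Lf) \<eta> \<and>
     nat_trans D D (comp_ftor Lf Rf) id_ftor \<epsilon> \<and>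
     (\<forall>X\<in>cobj C. ccomp D (\<epsilon> (fo Lf X)) (fm Lf (\<eta> X)) = cid D (fo Lf X)) \<and>
     (\<forall>Y\<in>cobj D. ccomp C (fm Rf (\<epsilon> Y)) (\<eta> (fo Rf Y)) = cid C (fo Rf Y))"

definition fully_faithful :: "('o1, 'm1, 'k) kcat \<Rightarrow> ('o2, 'm2, 'k) kcat \<Rightarrow>
    ('o1, 'm1, 'o2, 'm2) ftor \<Rightarrow> bool" where
  "fully_faithful C D F \<longleftrightarrow> is_functor C D F \<and>
     (\<forall>X\<in>cobj C. \<forall>Y\<in>cobj C. bij_betw (fm F) (hom C X Y) (hom D (fo F X) (fo F Y)))"

definition exceptional where
  "exceptional A B F L etaL epsL R etaR epsR \<longleftrightarrow>
     fully_faithful A B F \<and> adjunction B A L F etaL epsL \<and> adjunction A B F R etaR epsR"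

definition exceptionally_frobenius where
  "exceptionally_frobenius A B F L etaL epsL R etaR epsR \<longleftrightarrow>
     exceptional A B F L etaL epsL R etaR epsR \<and> (\<exists>\<theta>. nat_iso B A R L \<theta>)"

definition canon_phi where
  "canon_phi A F L R etaL etaR Y =
     ccomp A (inv_arr A (etaR (fo L Y))) (fm R (etaL Y))"

end

theory Submission
  imports Defs
begin

lemma hom_iff: "f \<in> hom C X Y \<longleftrightarrow> f \<in> carr C \<and> cdom C f = X \<and> ccod C f = Y"
  by (simp add: hom_def)

lemma cat_comp: "category C \<Longrightarrow> f \<in> hom C X Y \<Longrightarrow> g \<in> hom C Y Z \<Longrightarrow> ccomp C g f \<in> hom C X Z"
  unfolding category_def by blast

lemma cat_assoc: "category C \<Longrightarrow> f \<in> hom C W X \<Longrightarrow> g \<in> hom C X Y \<Longrightarrow> h \<in> hom C Y Z \<Longrightarrow>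
   ccomp C h (ccomp C g f) = ccomp C (ccomp C h g) f"
  unfolding category_def by blast

lemma cat_idl: "category C \<Longrightarrow> f \<in> hom C X Y \<Longrightarrow> ccomp C (cid C Y) f = f"
  unfolding category_def by blast

lemma cat_idr: "category C \<Longrightarrow> f \<in> hom C X Y \<Longrightarrow> ccomp C f (cid C X) = f"
  unfolding category_def by blast

lemma cat_id: "category C \<Longrightarrow> X \<in> cobj C \<Longrightarrow> cid C X \<in> hom C X X"
  unfolding category_def by blast

lemma hom_obj: "category C \<Longrightarrow> f \<in> hom C X Y \<Longrightarrow> X \<in> cobj C \<and> Y \<in> cobj C"
  unfolding category_def hom_def by blast

lemma iso_intro: "f \<in> hom C X Y \<Longrightarrow> g \<in> hom C Y X \<Longrightarrow> ccomp C g f = cid C X \<Longrightarrow>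
   ccomp C f g = cid C Y \<Longrightarrow> iso C f"
proof -
  assume f: "f \<in> hom C X Y" and g: "g \<in> hom C Y X" and 1: "ccomp C g f = cid C X"
    and 2: "ccomp C f g = cid C Y"
  have d: "cdom C f = X" "ccod C f = Y" "f \<in> carr C" using f by (auto simp: hom_def)
  show "iso C f" unfolding iso_def d using d(3) g 1 2 by blast
qed

lemma inv_arr_props:
  assumes C: "category C" and i: "iso C f" and f: "f \<in> hom C X Y"
  shows "inv_arr C f \<in> hom C Y X \<and> ccomp C (inv_arr C f) f = cid C X \<and> ccomp C f (inv_arr C f) = cid C Y"
proof -
  have d: "cdom C f = X" "ccod C f = Y" using f by (auto simp: hom_def)
  from i obtain g where g: "g \<in> hom C Y X" "ccomp C g f = cid C X" "ccomp C f g = cid C Y"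
    unfolding iso_def d by blast
  have uniq: "g' = g" if g': "g' \<in> hom C Y X" "ccomp C g' f = cid C X" "ccomp C f g' = cid C Y" for g'
  proof -
    have "g' = ccomp C g' (cid C Y)" using cat_idr[OF C g'(1)] by simp
    also have "\<dots> = ccomp C g' (ccomp C f g)" using g by simp
    also have "\<dots> = ccomp C (ccomp C g' f) g" using cat_assoc[OF C g(1) f g'(1)] by simp
    also have "\<dots> = g" using g' cat_idl[OF C g(1)] by simp
    finally show ?thesis .
  qed
  have "inv_arr C f = g" unfolding inv_arr_def d
  proof (rule the_equality)
    show "g \<in> hom C Y X \<and> ccomp C g f = cid C X \<and> ccomp C f g = cid C Y" using g by blast
  next
    fix g' assume "g' \<in> hom C Y X \<and> ccomp C g' f = cid C X \<and> ccomp C f g' = cid C Y"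
    thus "g' = g" using uniq by blast
  qed
  thus ?thesis using g by simp
qed

lemma iso_id: "category C \<Longrightarrow> X \<in> cobj C \<Longrightarrow> iso C (cid C X)"
proof -
  assume C: "category C" and X: "X \<in> cobj C"
  have i: "cid C X \<in> hom C X X" using cat_id[OF C X] .
  have e: "ccomp C (cid C X) (cid C X) = cid C X" using cat_idl[OF C i] .
  show "iso C (cid C X)" by (rule iso_intro[OF i i e e])
qed

lemma iso_inv: "category C \<Longrightarrow> iso C f \<Longrightarrow> f \<in> hom C X Y \<Longrightarrow> iso C (inv_arr C f)"
proof -
  assume C: "category C" and i: "iso C f" and f: "f \<in> hom C X Y"
  have p: "inv_arr C f \<in> hom C Y X" "ccomp C (inv_arr C f) f = cid C X" "ccomp C f (inv_arr C f) = cid C Y"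
    using inv_arr_props[OF C i f] by auto
  show "iso C (inv_arr C f)" by (rule iso_intro[OF p(1) f p(3) p(2)])
qed

lemma iso_comp:
  assumes C: "category C" and "iso C f" "iso C g" and f: "f \<in> hom C X Y" and g: "g \<in> hom C Y Z"
  shows "iso C (ccomp C g f)"
proof -
  obtain f' where f': "f' \<in> hom C Y X" "ccomp C f' f = cid C X" "ccomp C f f' = cid C Y"
    using inv_arr_props[OF C assms(2) f] by blast
  obtain g' where g': "g' \<in> hom C Z Y" "ccomp C g' g = cid C Y" "ccomp C g g' = cid C Z"
    using inv_arr_props[OF C assms(3) g] by blast
  have gf: "ccomp C g f \<in> hom C X Z" using cat_comp[OF C f g] .
  have h: "ccomp C f' g' \<in> hom C Z X" using cat_comp[OF C g'(1) f'(1)] .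
  have 1: "ccomp C (ccomp C f' g') (ccomp C g f) = cid C X"
  proof -
    have "ccomp C (ccomp C f' g') (ccomp C g f) = ccomp C f' (ccomp C g' (ccomp C g f))"
      using cat_assoc[OF C gf g'(1) f'(1)] by simp
    also have "ccomp C g' (ccomp C g f) = ccomp C (ccomp C g' g) f"
      using cat_assoc[OF C f g g'(1)] .
    also have "\<dots> = f" using g'(2) cat_idl[OF C f] by simp
    finally show ?thesis using f'(2) by simp
  qed
  have 2: "ccomp C (ccomp C g f) (ccomp C f' g') = cid C Z"
  proof -
    have "ccomp C (ccomp C g f) (ccomp C f' g') = ccomp C g (ccomp C f (ccomp C f' g'))"
      using cat_assoc[OF C h f g] by simp
    also have "ccomp C f (ccomp C f' g') = ccomp C (ccomp C f f') g'"
      using cat_assoc[OF C g'(1) f'(1) f] .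
    also have "\<dots> = g'" using f'(3) cat_idl[OF C g'(1)] by simp
    finally show ?thesis using g'(3) by simp
  qed
  show ?thesis by (rule iso_intro[OF gf h 1 2])
qed

lemma iso_cancel_left:
  assumes C: "category C" and g: "g \<in> hom C Y Z" "iso C g" and f: "f \<in> hom C X Y"
    and gf: "iso C (ccomp C g f)"
  shows "iso C f"
proof -
  obtain g' where g': "g' \<in> hom C Z Y" "ccomp C g' g = cid C Y" "iso C g'"
    using inv_arr_props[OF C g(2) g(1)] iso_inv[OF C g(2) g(1)] by blast
  have "ccomp C g' (ccomp C g f) = ccomp C (ccomp C g' g) f"
    using cat_assoc[OF C f g(1) g'(1)] .
  also have "\<dots> = f" using g'(2) cat_idl[OF C f] by simp
  finally have e: "f = ccomp C g' (ccomp C g f)" by simp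
  show ?thesis
    by (subst e, rule iso_comp[OF C gf g'(3) cat_comp[OF C f g(1)] g'(1)])
qed

lemma left_inv_iso:
  assumes C: "category C" and e: "e \<in> hom C Y X" "iso C e" and h: "h \<in> hom C X Y"
    and eh: "ccomp C e h = cid C X"
  shows "iso C h"
  using iso_cancel_left[OF C e h] eh iso_id[OF C] hom_obj[OF C h] by simp

lemma functor_iso:
  assumes C: "category C" and D: "category D" and F: "is_functor C D F"
    and i: "iso C f" and f: "f \<in> hom C X Y"
  shows "iso D (fm F f)"
proof -
  obtain g where g: "g \<in> hom C Y X" "ccomp C g f = cid C X" "ccomp C f g = cid C Y"
    using inv_arr_props[OF C i f] by blast
  have XY: "X \<in> cobj C" "Y \<in> cobj C" using hom_obj[OF C f] by auto
  have Ff: "fm F f \<in> hom D (fo F X) (fo F Y)" and Fg: "fm F g \<in> hom D (fo F Y) (fo F X)"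
    using F f g(1) unfolding is_functor_def by blast+
  have 1: "ccomp D (fm F g) (fm F f) = cid D (fo F X)"
    using F f g XY unfolding is_functor_def by metis
  have 2: "ccomp D (fm F f) (fm F g) = cid D (fo F Y)"
    using F f g XY unfolding is_functor_def by metis
  show ?thesis by (rule iso_intro[OF Ff Fg 1 2])
qed

lemma unit_iso:
  assumes A: "category A" and B: "category B" and ff: "fully_faithful A B F"
    and adj: "adjunction A B F R etaR epsR" and X: "X \<in> cobj A"
  shows "iso A (etaR X)"
proof -
  have Ff: "is_functor A B F" and Rf: "is_functor B A R"
    using adj unfolding adjunction_def by auto
  have nt1: "nat_trans A A id_ftor (comp_ftor R F) etaR"
    and nt2: "nat_trans B B (comp_ftor F R) id_ftor epsR"
    and tr1: "\<forall>X\<in>cobj A. ccomp B (epsR (fo F X)) (fm F (etaR X)) = cid B (fo F X)"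
    and tr2: "\<forall>Y\<in>cobj B. ccomp A (fm R (epsR Y)) (etaR (fo R Y)) = cid A (fo R Y)"
    using adj unfolding adjunction_def by auto
  have FX: "fo F X \<in> cobj B" using Ff X unfolding is_functor_def by blast
  have RFX: "fo R (fo F X) \<in> cobj A" using Rf FX unfolding is_functor_def by blast
  have eX: "etaR X \<in> hom A X (fo R (fo F X))"
    using nt1 X unfolding nat_trans_def by (simp add: id_ftor_def comp_ftor_def)
  have eps: "epsR (fo F X) \<in> hom B (fo F (fo R (fo F X))) (fo F X)"
    using nt2 FX unfolding nat_trans_def by (simp add: id_ftor_def comp_ftor_def)
  have bij: "bij_betw (fm F) (hom A (fo R (fo F X)) X) (hom B (fo F (fo R (fo F X))) (fo F X))"
    using ff RFX X unfolding fully_faithful_def by blast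
  then obtain g where g: "g \<in> hom A (fo R (fo F X)) X" "fm F g = epsR (fo F X)"
    using eps unfolding bij_betw_def by (metis imageE)
  have ge: "ccomp A g (etaR X) \<in> hom A X X" using cat_comp[OF A eX g(1)] .
  have "fm F (ccomp A g (etaR X)) = ccomp B (fm F g) (fm F (etaR X))"
    using Ff eX g(1) unfolding is_functor_def by blast
  also have "\<dots> = cid B (fo F X)" using g(2) tr1 X by simp
  also have "\<dots> = fm F (cid A X)" using Ff X unfolding is_functor_def by simp
  finally have "fm F (ccomp A g (etaR X)) = fm F (cid A X)" .
  moreover have "bij_betw (fm F) (hom A X X) (hom B (fo F X) (fo F X))"
    using ff X unfolding fully_faithful_def by blast
  ultimately have 1: "ccomp A g (etaR X) = cid A X"
    using ge cat_id[OF A X] unfolding bij_betw_def inj_on_def by blast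
  have nat1: "\<forall>X Y f. f \<in> hom A X Y \<longrightarrow> ccomp A (etaR Y) f = ccomp A (fm R (fm F f)) (etaR X)"
    using nt1 unfolding nat_trans_def by (simp add: id_ftor_def comp_ftor_def)
  have "ccomp A (etaR X) g = ccomp A (fm R (fm F g)) (etaR (fo R (fo F X)))"
    using nat1 g(1) by blast
  hence "ccomp A (etaR X) g = ccomp A (fm R (epsR (fo F X))) (etaR (fo R (fo F X)))"
    using g(2) by simp
  also have "\<dots> = cid A (fo R (fo F X))" using tr2 FX by simp
  finally have 2: "ccomp A (etaR X) g = cid A (fo R (fo F X))" .
  show ?thesis by (rule iso_intro[OF eX g(1) 1 2])
qed

lemma counit_iso:
  assumes A: "category A" and B: "category B" and ff: "fully_faithful A B F"
    and adj: "adjunction B A L F etaL epsL" and X: "X \<in> cobj A"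
  shows "iso A (epsL X)"
proof -
  have Ff: "is_functor A B F" and Lf: "is_functor B A L"
    using adj unfolding adjunction_def by auto
  have nt1: "nat_trans B B id_ftor (comp_ftor F L) etaL"
    and nt2: "nat_trans A A (comp_ftor L F) id_ftor epsL"
    and tr1: "\<forall>Y\<in>cobj B. ccomp A (epsL (fo L Y)) (fm L (etaL Y)) = cid A (fo L Y)"
    and tr2: "\<forall>X\<in>cobj A. ccomp B (fm F (epsL X)) (etaL (fo F X)) = cid B (fo F X)"
    using adj unfolding adjunction_def by auto
  have FX: "fo F X \<in> cobj B" using Ff X unfolding is_functor_def by blast
  have LFX: "fo L (fo F X) \<in> cobj A" using Lf FX unfolding is_functor_def by blast
  have eX: "epsL X \<in> hom A (fo L (fo F X)) X"
    using nt2 X unfolding nat_trans_def by (simp add: id_ftor_def comp_ftor_def)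
  have et: "etaL (fo F X) \<in> hom B (fo F X) (fo F (fo L (fo F X)))"
    using nt1 FX unfolding nat_trans_def by (simp add: id_ftor_def comp_ftor_def)
  have bij: "bij_betw (fm F) (hom A X (fo L (fo F X))) (hom B (fo F X) (fo F (fo L (fo F X))))"
    using ff LFX X unfolding fully_faithful_def by blast
  then obtain g where g: "g \<in> hom A X (fo L (fo F X))" "fm F g = etaL (fo F X)"
    using et unfolding bij_betw_def by (metis imageE)
  have ge: "ccomp A (epsL X) g \<in> hom A X X" using cat_comp[OF A g(1) eX] .
  have "fm F (ccomp A (epsL X) g) = ccomp B (fm F (epsL X)) (fm F g)"
    using Ff eX g(1) unfolding is_functor_def by blast
  also have "\<dots> = cid B (fo F X)" using g(2) tr2 X by simp
  also have "\<dots> = fm F (cid A X)" using Ff X unfolding is_functor_def by simp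
  finally have "fm F (ccomp A (epsL X) g) = fm F (cid A X)" .
  moreover have "bij_betw (fm F) (hom A X X) (hom B (fo F X) (fo F X))"
    using ff X unfolding fully_faithful_def by blast
  ultimately have 1: "ccomp A (epsL X) g = cid A X"
    using ge cat_id[OF A X] unfolding bij_betw_def inj_on_def by blast
  have nat2: "\<forall>X Y f. f \<in> hom A X Y \<longrightarrow> ccomp A (epsL Y) (fm L (fm F f)) = ccomp A f (epsL X)"
    using nt2 unfolding nat_trans_def by (simp add: id_ftor_def comp_ftor_def)
  have "ccomp A (epsL (fo L (fo F X))) (fm L (fm F g)) = ccomp A g (epsL X)"
    using nat2 g(1) by blast
  hence "ccomp A g (epsL X) = ccomp A (epsL (fo L (fo F X))) (fm L (etaL (fo F X)))"
    using g(2) by simp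
  also have "\<dots> = cid A (fo L (fo F X))" using tr1 FX by simp
  finally have 2: "ccomp A g (epsL X) = cid A (fo L (fo F X))" .
  show ?thesis by (rule iso_intro[OF eX g(1) 2 1])
qed

lemma triangulated_category: "triangulated C \<Longrightarrow> category C"
  unfolding triangulated_def kadditive_def klinear_def by (elim conjE, assumption)

theorem proposition3p7:
  fixes A :: "('a, 'am, 'k::field) kcat" and B :: "('b, 'bm, 'k) kcat"
    and F :: "('a, 'am, 'b, 'bm) ftor" and L R :: "('b, 'bm, 'a, 'am) ftor"
    and etaL :: "'b \<Rightarrow> 'bm" and epsL :: "'a \<Rightarrow> 'am"
    and etaR :: "'a \<Rightarrow> 'am" and epsR :: "'b \<Rightarrow> 'bm"
  assumes "triangulated A" and "triangulated B"
    and "exact_functor A B F" and "exact_functor B A L" and "exact_functor B A R"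
    and "exceptionally_frobenius A B F L etaL epsL R etaR epsR"
  shows "\<forall>Y\<in>cobj B. canon_phi A F L R etaL etaR Y \<in> hom A (fo R Y) (fo L Y)
           \<and> iso A (canon_phi A F L R etaL etaR Y)"
proof
  fix Y assume Y: "Y \<in> cobj B"
  have A: "category A" and B: "category B" using assms(1,2) triangulated_category by auto
  have ff: "fully_faithful A B F" and adjL: "adjunction B A L F etaL epsL"
    and adjR: "adjunction A B F R etaR epsR"
    using assms(6) unfolding exceptionally_frobenius_def exceptional_def by auto
  obtain \<theta> where th: "nat_iso B A R L \<theta>"
    using assms(6) unfolding exceptionally_frobenius_def by blast
  have Ff: "is_functor A B F" and Lf: "is_functor B A L" and Rf: "is_functor B A R"
    using adjL adjR unfolding adjunction_def by auto
  have nt1: "nat_trans B B id_ftor (comp_ftor F L) etaL"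
    and tr1: "\<forall>Y\<in>cobj B. ccomp A (epsL (fo L Y)) (fm L (etaL Y)) = cid A (fo L Y)"
    and nt2: "nat_trans A A (comp_ftor L F) id_ftor epsL"
    using adjL unfolding adjunction_def by auto
  have ntR: "nat_trans A A id_ftor (comp_ftor R F) etaR"
    using adjR unfolding adjunction_def by auto
  have LY: "fo L Y \<in> cobj A" using Lf Y unfolding is_functor_def by blast
  have FLY: "fo F (fo L Y) \<in> cobj B" using Ff LY unfolding is_functor_def by blast
  have eY: "etaL Y \<in> hom B Y (fo F (fo L Y))"
    using nt1 Y unfolding nat_trans_def by (simp add: id_ftor_def comp_ftor_def)
  have ReY: "fm R (etaL Y) \<in> hom A (fo R Y) (fo R (fo F (fo L Y)))"
    using Rf eY unfolding is_functor_def by blast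
  have LeY: "fm L (etaL Y) \<in> hom A (fo L Y) (fo L (fo F (fo L Y)))"
    using Lf eY unfolding is_functor_def by blast
  have epsLY: "epsL (fo L Y) \<in> hom A (fo L (fo F (fo L Y))) (fo L Y)"
    using nt2 LY unfolding nat_trans_def by (simp add: id_ftor_def comp_ftor_def)
  have isoLe: "iso A (fm L (etaL Y))"
    using left_inv_iso[OF A epsLY counit_iso[OF A B ff adjL LY] LeY] tr1 Y by simp
  have thY: "\<theta> Y \<in> hom A (fo R Y) (fo L Y)" "iso A (\<theta> Y)"
    using th Y unfolding nat_iso_def nat_trans_def by auto
  have thF: "\<theta> (fo F (fo L Y)) \<in> hom A (fo R (fo F (fo L Y))) (fo L (fo F (fo L Y)))"
    "iso A (\<theta> (fo F (fo L Y)))"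
    using th FLY unfolding nat_iso_def nat_trans_def by auto
  have nat: "ccomp A (\<theta> (fo F (fo L Y))) (fm R (etaL Y)) = ccomp A (fm L (etaL Y)) (\<theta> Y)"
    using th eY unfolding nat_iso_def nat_trans_def by blast
  have "iso A (ccomp A (fm L (etaL Y)) (\<theta> Y))"
    using iso_comp[OF A thY(2) isoLe thY(1) LeY] .
  hence isoRe: "iso A (fm R (etaL Y))"
    using iso_cancel_left[OF A thF ReY] nat by simp
  have etR: "etaR (fo L Y) \<in> hom A (fo L Y) (fo R (fo F (fo L Y)))"
    using ntR LY unfolding nat_trans_def by (simp add: id_ftor_def comp_ftor_def)
  have isoetR: "iso A (etaR (fo L Y))" using unit_iso[OF A B ff adjR LY] .
  have inv: "inv_arr A (etaR (fo L Y)) \<in> hom A (fo R (fo F (fo L Y))) (fo L Y)"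
    "iso A (inv_arr A (etaR (fo L Y)))"
    using inv_arr_props[OF A isoetR etR] iso_inv[OF A isoetR etR] by auto
  show "canon_phi A F L R etaL etaR Y \<in> hom A (fo R Y) (fo L Y)
           \<and> iso A (canon_phi A F L R etaL etaR Y)"
    unfolding canon_phi_def
    using cat_comp[OF A ReY inv(1)] iso_comp[OF A isoRe inv(2) ReY inv(1)] by simp
qed

end
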